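(* Every graph that is $C_3$-free and probe $P_5$-free is $3$-colourable. In particular, every probe $(C_3,P_5)$-free graph is $3$-colourable.
   Context: All graphs are finite and simple. $C_3$ is the triangle and $P_5$ is the path on $5$ vertices. A graph is $H$-free if it contains no induced subgraph isomorphic to $H$, and $(H_1,H_2)$-free if it is both $H_1$-free and $H_2$-free. For $G=(V,E)$ and a set $F$ of pairs of vertices, $G+F=(V,E\cup F)$. A graph $G$ is probe $P_5$-free if there is an independent set $N$ of $G$ and a set $F\subseteq\binom{N}{2}$ such that $G+F$ is $P_5$-free; $G$ is probe $(C_3,P_5)$-free if there is an independent set $N$ and $F\subseteq\binom{N}{2}$ such that $G+F$ is $(C_3,P_5)$-free. *)

theory Defs
  imports Main
begin

definition simple_graph :: "'a set \<Rightarrow> 'a set set \<Rightarrow> bool" where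
  "simple_graph V E \<longleftrightarrow> finite V \<and> (\<forall>e\<in>E. e \<subseteq> V \<and> card e = 2)"

definition pairs :: "'a set \<Rightarrow> 'a set set" where
  "pairs N = {e. e \<subseteq> N \<and> card e = 2}"

definition contains_induced ::
  "nat set \<Rightarrow> nat set set \<Rightarrow> 'a set \<Rightarrow> 'a set set \<Rightarrow> bool" where
  "contains_induced VH EH V E \<longleftrightarrow>
     (\<exists>f. inj_on f VH \<and> f ` VH \<subseteq> V \<and>
          (\<forall>x\<in>VH. \<forall>y\<in>VH. ({f x, f y} \<in> E \<longleftrightarrow> {x, y} \<in> EH)))"

definition H_free :: "nat set \<Rightarrow> nat set set \<Rightarrow> 'a set \<Rightarrow> 'a set set \<Rightarrow> bool" where
  "H_free VH EH V E \<longleftrightarrow> \<not> contains_induced VH EH V E"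

definition C3_V :: "nat set" where "C3_V = {0, 1, 2}"
definition C3_E :: "nat set set" where "C3_E = {{0, 1}, {1, 2}, {0, 2}}"

definition P5_V :: "nat set" where "P5_V = {0, 1, 2, 3, 4}"
definition P5_E :: "nat set set" where "P5_E = {{0, 1}, {1, 2}, {2, 3}, {3, 4}}"

definition C3_free :: "'a set \<Rightarrow> 'a set set \<Rightarrow> bool" where
  "C3_free V E \<longleftrightarrow> H_free C3_V C3_E V E"

definition P5_free :: "'a set \<Rightarrow> 'a set set \<Rightarrow> bool" where
  "P5_free V E \<longleftrightarrow> H_free P5_V P5_E V E"

definition independent_set :: "'a set \<Rightarrow> 'a set set \<Rightarrow> 'a set \<Rightarrow> bool" where
  "independent_set V E N \<longleftrightarrow> N \<subseteq> V \<and> (\<forall>u\<in>N. \<forall>v\<in>N. {u, v} \<notin> E)"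

definition probe_P5_free :: "'a set \<Rightarrow> 'a set set \<Rightarrow> bool" where
  "probe_P5_free V E \<longleftrightarrow>
     (\<exists>N F. independent_set V E N \<and> F \<subseteq> pairs N \<and> P5_free V (E \<union> F))"

definition probe_C3_P5_free :: "'a set \<Rightarrow> 'a set set \<Rightarrow> bool" where
  "probe_C3_P5_free V E \<longleftrightarrow>
     (\<exists>N F. independent_set V E N \<and> F \<subseteq> pairs N \<and>
            C3_free V (E \<union> F) \<and> P5_free V (E \<union> F))"

definition colourable :: "nat \<Rightarrow> 'a set \<Rightarrow> 'a set set \<Rightarrow> bool" where
  "colourable k V E \<longleftrightarrow>
     (\<exists>c :: 'a \<Rightarrow> nat. (\<forall>v\<in>V. c v < k) \<and>
        (\<forall>u\<in>V. \<forall>v\<in>V. {u, v} \<in> E \<longrightarrow> c u \<noteq> c v))"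

end

theory Submission
  imports Defs
begin

definition tri :: "'a set \<Rightarrow> 'a set set \<Rightarrow> bool" where
  "tri V E \<longleftrightarrow> (\<forall>a\<in>V. \<forall>b\<in>V. \<forall>c\<in>V. {a,b}\<in>E \<longrightarrow> {b,c}\<in>E \<longrightarrow> {a,c}\<in>E \<longrightarrow> False)"

definition nop5 :: "'a set \<Rightarrow> 'a set set \<Rightarrow> bool" where
  "nop5 V H \<longleftrightarrow> (\<forall>a\<in>V. \<forall>b\<in>V. \<forall>c\<in>V. \<forall>d\<in>V. \<forall>e\<in>V.
     {a,b}\<in>H \<longrightarrow> {b,c}\<in>H \<longrightarrow> {c,d}\<in>H \<longrightarrow> {d,e}\<in>H \<longrightarrow>
     {a,c}\<notin>H \<longrightarrow> {a,d}\<notin>H \<longrightarrow> {a,e}\<notin>H \<longrightarrow> {b,d}\<notin>H \<longrightarrow> {b,e}\<notin>H \<longrightarrow> {c,e}\<notin>H \<longrightarrow> False)"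

definition noc5 :: "'a set \<Rightarrow> 'a set set \<Rightarrow> bool" where
  "noc5 V H \<longleftrightarrow> (\<forall>a\<in>V. \<forall>b\<in>V. \<forall>c\<in>V. \<forall>d\<in>V. \<forall>e\<in>V.
     {a,b}\<in>H \<longrightarrow> {b,c}\<in>H \<longrightarrow> {c,d}\<in>H \<longrightarrow> {d,e}\<in>H \<longrightarrow> {e,a}\<in>H \<longrightarrow>
     {a,c}\<notin>H \<longrightarrow> {a,d}\<notin>H \<longrightarrow> {b,d}\<notin>H \<longrightarrow> {b,e}\<notin>H \<longrightarrow> {c,e}\<notin>H \<longrightarrow> False)"

definition nolp :: "'a set \<Rightarrow> 'a set set \<Rightarrow> bool" where
  "nolp V H \<longleftrightarrow> (\<forall>v\<in>V. {v} \<notin> H)"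

lemma tri_mono: "tri V E \<Longrightarrow> W \<subseteq> V \<Longrightarrow> tri W E"
  unfolding tri_def by blast
lemma nop5_mono: "nop5 V E \<Longrightarrow> W \<subseteq> V \<Longrightarrow> nop5 W E"
  unfolding nop5_def by (meson subsetD)
lemma noc5_mono: "noc5 V E \<Longrightarrow> W \<subseteq> V \<Longrightarrow> noc5 W E"
  unfolding noc5_def by (meson subsetD)
lemma nolp_mono: "nolp V E \<Longrightarrow> W \<subseteq> V \<Longrightarrow> nolp W E"
  unfolding nolp_def by blast

lemma triD:
  assumes "tri V E" "a\<in>V" "b\<in>V" "c\<in>V" "{a,b}\<in>E" "{b,c}\<in>E" "{a,c}\<in>E"
  shows False
  using assms unfolding tri_def by blast

lemma nop5D:
  assumes "nop5 V H" "a\<in>V" "b\<in>V" "c\<in>V" "d\<in>V" "e\<in>V"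
    "{a,b}\<in>H" "{b,c}\<in>H" "{c,d}\<in>H" "{d,e}\<in>H"
    "{a,c}\<notin>H" "{a,d}\<notin>H" "{a,e}\<notin>H" "{b,d}\<notin>H" "{b,e}\<notin>H" "{c,e}\<notin>H"
  shows False
  using assms unfolding nop5_def by blast

lemma noc5D:
  assumes "noc5 V H" "a\<in>V" "b\<in>V" "c\<in>V" "d\<in>V" "e\<in>V"
    "{a,b}\<in>H" "{b,c}\<in>H" "{c,d}\<in>H" "{d,e}\<in>H" "{e,a}\<in>H"
    "{a,c}\<notin>H" "{a,d}\<notin>H" "{b,d}\<notin>H" "{b,e}\<notin>H" "{c,e}\<notin>H"
  shows False
  using assms unfolding noc5_def by blast

lemma tri_from_C3:
  assumes "C3_free V E" "nolp V E"
  shows "tri V E"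
  unfolding tri_def
proof (intro ballI impI)
  fix a b c assume V: "a\<in>V" "b\<in>V" "c\<in>V" and e: "{a,b}\<in>E" "{b,c}\<in>E" "{a,c}\<in>E"
  have d: "a \<noteq> b" "b \<noteq> c" "a \<noteq> c" using e V assms(2) unfolding nolp_def by auto
  let ?f = "\<lambda>i::nat. if i = 0 then a else if i = 1 then b else c"
  have "contains_induced C3_V C3_E V E"
    unfolding contains_induced_def
  proof (intro exI conjI)
    show "inj_on ?f C3_V" using d unfolding C3_V_def inj_on_def by auto
    show "?f ` C3_V \<subseteq> V" using V unfolding C3_V_def by auto
    show "\<forall>x\<in>C3_V. \<forall>y\<in>C3_V. ({?f x, ?f y} \<in> E) = ({x, y} \<in> C3_E)"
      using e V assms(2) unfolding C3_V_def C3_E_def nolp_def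
      by (auto simp: insert_commute doubleton_eq_iff)
  qed
  then show False using assms(1) unfolding C3_free_def H_free_def by blast
qed

lemma nop5_from_P5:
  assumes "P5_free V H" "nolp V H"
  shows "nop5 V H"
  unfolding nop5_def
proof (intro ballI impI)
  fix a b c d e assume V: "a\<in>V" "b\<in>V" "c\<in>V" "d\<in>V" "e\<in>V"
    and h: "{a,b}\<in>H" "{b,c}\<in>H" "{c,d}\<in>H" "{d,e}\<in>H"
    "{a,c}\<notin>H" "{a,d}\<notin>H" "{a,e}\<notin>H" "{b,d}\<notin>H" "{b,e}\<notin>H" "{c,e}\<notin>H"
  have nl: "{a}\<notin>H" "{b}\<notin>H" "{c}\<notin>H" "{d}\<notin>H" "{e}\<notin>H" using V assms(2) unfolding nolp_def by auto
  have dd: "a\<noteq>b" "a\<noteq>c" "a\<noteq>d" "a\<noteq>e" "b\<noteq>c" "b\<noteq>d" "b\<noteq>e" "c\<noteq>d" "c\<noteq>e" "d\<noteq>e"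
    using h nl by (auto simp: insert_commute)
  let ?f = "\<lambda>i::nat. if i = 0 then a else if i = 1 then b else if i = 2 then c else if i = 3 then d else e"
  have "contains_induced P5_V P5_E V H"
    unfolding contains_induced_def
  proof (intro exI conjI)
    show "inj_on ?f P5_V" using dd unfolding P5_V_def inj_on_def by auto
    show "?f ` P5_V \<subseteq> V" using V unfolding P5_V_def by auto
    show "\<forall>x\<in>P5_V. \<forall>y\<in>P5_V. ({?f x, ?f y} \<in> H) = ({x, y} \<in> P5_E)"
      using h nl unfolding P5_V_def P5_E_def
      by (auto simp: insert_commute doubleton_eq_iff)
  qed
  then show False using assms(1) unfolding P5_free_def H_free_def by blast
qed


lemma two_col:
  assumes "finite S" "nolp S E" "tri S E" "nop5 S E" "noc5 S E"
  shows "\<exists>\<phi>::'a\<Rightarrow>bool. \<forall>u\<in>S. \<forall>v\<in>S. {u,v}\<in>E \<longrightarrow> \<phi> u \<noteq> \<phi> v"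
  using assms
proof (induction "card S" arbitrary: S rule: less_induct)
  case less
  show ?case
  proof (cases "S = {}")
    case True then show ?thesis by auto
  next
    case False
    then obtain r where r: "r \<in> S" by auto
    have nl: "\<And>v. v \<in> S \<Longrightarrow> {v} \<notin> E" using less.prems(2) unfolding nolp_def by auto
    note T = triD[OF less.prems(3)]
    note P = nop5D[OF less.prems(4)]
    note C = noc5D[OF less.prems(5)]
    define L1 where "L1 = {x\<in>S. {r,x}\<in>E}"
    define L2 where "L2 = {x\<in>S. x \<noteq> r \<and> x \<notin> L1 \<and> (\<exists>y\<in>L1. {y,x}\<in>E)}"
    define L3 where "L3 = {x\<in>S. x \<noteq> r \<and> x \<notin> L1 \<and> x \<notin> L2 \<and> (\<exists>y\<in>L2. {y,x}\<in>E)}"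
    define R where "R = insert r (L1 \<union> L2 \<union> L3)"
    have RS: "R \<subseteq> S" using r unfolding R_def L1_def L2_def L3_def by auto
    have rL: "r \<notin> L1" "r \<notin> L2" "r \<notin> L3" using nl[OF r] unfolding L1_def L2_def L3_def by auto
    have L11: False if "u \<in> L1" "v \<in> L1" "{u,v}\<in>E" for u v
      using T[of r u v] that r unfolding L1_def by (auto simp: insert_commute)
    have L22: False if H: "u \<in> L2" "v \<in> L2" "{u,v}\<in>E" for u v
    proof -
      obtain pu where pu: "pu \<in> L1" "{pu,u}\<in>E" using H(1) unfolding L2_def by blast
      obtain pv where pv: "pv \<in> L1" "{pv,v}\<in>E" using H(2) unfolding L2_def by blast
      have S: "u\<in>S" "v\<in>S" "pu\<in>S" "pv\<in>S" using H pu pv unfolding L1_def L2_def by auto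
      have a: "{pu,v}\<notin>E" using T[of pu u v] S pu H by (auto simp: insert_commute)
      have b: "{pv,u}\<notin>E" using T[of pv v u] S pv H by (auto simp: insert_commute)
      have c: "{pu,pv}\<notin>E" using L11 pu pv by auto
      have d: "{r,u}\<notin>E" "{r,v}\<notin>E" using H S unfolding L1_def L2_def by auto
      have e: "{r,pu}\<in>E" "{pv,r}\<in>E" using pu pv unfolding L1_def by (auto simp: insert_commute)
      show False
        apply (rule C[of r pu u v pv])
        using r S pu pv H a b c d e by (auto simp: insert_commute)
    qed
    have L13: False if "u \<in> L1" "v \<in> L3" "{u,v}\<in>E" for u v
      using that unfolding L3_def L2_def by auto
    have L33: False if H: "u \<in> L3" "v \<in> L3" "{u,v}\<in>E" for u v
    proof -
      obtain pu where pu: "pu \<in> L2" "{pu,u}\<in>E" using H(1) unfolding L3_def by auto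
      obtain pv where pv: "pv \<in> L2" "{pv,v}\<in>E" using H(2) unfolding L3_def by auto
      obtain g where g: "g \<in> L1" "{g,pu}\<in>E" using pu unfolding L2_def by auto
      have S: "u\<in>S" "v\<in>S" "pu\<in>S" "pv\<in>S" "g\<in>S" using H pu pv g unfolding L1_def L2_def L3_def by auto
      have a: "{pu,v}\<notin>E" using T[of pu u v] S pu H by (auto simp: insert_commute)
      have b: "{pv,u}\<notin>E" using T[of pv v u] S pv H by (auto simp: insert_commute)
      have c: "{pu,pv}\<notin>E" using L22 pu pv by auto
      have d: "{g,u}\<notin>E" "{g,v}\<notin>E" using L13 g H by auto
      show False
      proof (cases "{g,pv}\<in>E")
        case True
        show False
          apply (rule C[of g pu u v pv])
          using True S pu pv g H a b c d by (auto simp: insert_commute)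
      next
        case False
        show False
          apply (rule P[of g pu u v pv])
          using False S pu pv g H a b c d by (auto simp: insert_commute)
      qed
    qed
    have closed: "x \<in> R" if H: "w \<in> R" "x \<in> S" "{w,x}\<in>E" for w x
    proof (rule ccontr)
      assume xR: "x \<notin> R"
      have "w \<in> L3" using H xR unfolding R_def L1_def L2_def L3_def
        by (auto simp: insert_commute)
      then obtain pw where pw: "pw \<in> L2" "{pw,w}\<in>E" unfolding L3_def by auto
      obtain g where g: "g \<in> L1" "{g,pw}\<in>E" using pw unfolding L2_def by auto
      have S: "w\<in>S" "pw\<in>S" "g\<in>S" using \<open>w\<in>L3\<close> pw g unfolding L1_def L2_def L3_def by auto
      have n1: "{x,pw}\<notin>E" using xR pw H(2) unfolding R_def L3_def by (auto simp: insert_commute)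
      have n2: "{x,g}\<notin>E" using xR g H(2) unfolding R_def L2_def by (auto simp: insert_commute)
      have n3: "{x,r}\<notin>E" using xR H(2) unfolding R_def L1_def by (auto simp: insert_commute)
      have n4: "{w,g}\<notin>E" using L13 g \<open>w\<in>L3\<close> by (auto simp: insert_commute)
      have n5: "{w,r}\<notin>E" "{pw,r}\<notin>E" using \<open>w\<in>L3\<close> pw unfolding L1_def L2_def L3_def
        by (auto simp: insert_commute)
      have e1: "{g,r}\<in>E" using g unfolding L1_def by (auto simp: insert_commute)
      show False
        apply (rule P[of x w pw g r])
        using S r H n1 n2 n3 n4 n5 e1 pw g by (auto simp: insert_commute)
    qed
    have card: "card (S - R) < card S"
      using r RS less.prems(1) unfolding R_def by (intro psubset_card_mono) auto
    have "\<exists>\<psi>::'a\<Rightarrow>bool. \<forall>u\<in>S-R. \<forall>v\<in>S-R. {u,v}\<in>E \<longrightarrow> \<psi> u \<noteq> \<psi> v"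
      apply (rule less.hyps[OF card])
      using less.prems tri_mono nop5_mono noc5_mono nolp_mono by (meson Diff_subset finite_Diff)+
    then obtain \<psi> :: "'a\<Rightarrow>bool" where psi: "\<forall>u\<in>S-R. \<forall>v\<in>S-R. {u,v}\<in>E \<longrightarrow> \<psi> u \<noteq> \<psi> v" by blast
    define \<phi> where "\<phi> x = (if x \<in> R then (x \<in> L1 \<or> x \<in> L3) else \<psi> x)" for x
    have disj: "\<And>x. x \<in> L1 \<Longrightarrow> x \<notin> L2" "\<And>x. x \<in> L1 \<Longrightarrow> x \<notin> L3" "\<And>x. x \<in> L2 \<Longrightarrow> x \<notin> L3"
      unfolding L2_def L3_def by auto
    have rn: "v \<in> L1" if "{r,v}\<in>E" "v\<in>S" for v using that unfolding L1_def by auto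
    have inR: "(u \<in> L1 \<or> u \<in> L3) \<noteq> (v \<in> L1 \<or> v \<in> L3)"
      if H: "u \<in> R" "v \<in> R" "{u,v}\<in>E" "u\<in>S" "v\<in>S" for u v
    proof -
      have 12: "v \<in> L2 \<or> v \<in> L1 \<or> v = r" if "u \<in> L1" "{u,v}\<in>E" "v\<in>S" for u v
        using that unfolding L2_def by auto
      have vu: "{v,u}\<in>E" using H(3) by (simp add: insert_commute)
      consider "u = r" | "u \<in> L1" | "u \<in> L2" | "u \<in> L3" using H(1) unfolding R_def by auto
      then show ?thesis
      proof cases
        case 1 then have "v \<in> L1" using rn H by auto
        then show ?thesis using 1 rL by auto
      next
        case 2
        then have "v \<in> L2 \<or> v \<in> L1 \<or> v = r" using 12 H by auto
        then show ?thesis using 2 L11[of u v] H disj rL by auto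
      next
        case 3
        have "v \<noteq> r" using rn[of u] vu H 3 disj by auto
        moreover have "v \<notin> L2" using L22[of u v] 3 H by auto
        ultimately have "v \<in> L1 \<or> v \<in> L3" using H(2) unfolding R_def by auto
        then show ?thesis using 3 disj by auto
      next
        case 4
        have "v \<noteq> r" using rn[of u] vu H 4 disj by auto
        moreover have "v \<notin> L3" using L33[of u v] 4 H by auto
        moreover have "v \<notin> L1" using L13[of v u] 4 vu by auto
        ultimately have "v \<in> L2" using H(2) unfolding R_def by auto
        then show ?thesis using 4 disj by auto
      qed
    qed
    show ?thesis
    proof (intro exI ballI impI)
      fix u v assume uv: "u \<in> S" "v \<in> S" "{u,v}\<in>E"
      show "\<phi> u \<noteq> \<phi> v"
      proof (cases "u \<in> R")
        case True
        then have "v \<in> R" using closed uv by auto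
        then show ?thesis using inR[of u v] True uv unfolding \<phi>_def by auto
      next
        case False
        then have "v \<notin> R" using closed[of v u] uv by (auto simp: insert_commute)
        then show ?thesis using psi False uv unfolding \<phi>_def by auto
      qed
    qed
  qed
qed


lemma nop5_transfer:
  assumes "nop5 V H" "W \<subseteq> V" "\<And>u v. u \<in> W \<Longrightarrow> v \<in> W \<Longrightarrow> ({u,v}\<in>H) = ({u,v}\<in>E)"
  shows "nop5 W E"
  unfolding nop5_def
proof (intro ballI impI)
  fix a b c d e assume W: "a\<in>W" "b\<in>W" "c\<in>W" "d\<in>W" "e\<in>W"
    and h: "{a,b}\<in>E" "{b,c}\<in>E" "{c,d}\<in>E" "{d,e}\<in>E"
    "{a,c}\<notin>E" "{a,d}\<notin>E" "{a,e}\<notin>E" "{b,d}\<notin>E" "{b,e}\<notin>E" "{c,e}\<notin>E"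
  show False
    apply (rule nop5D[OF assms(1), of a b c d e])
    using W h assms(2) by (auto simp: assms(3))
qed

lemma caseB:
  assumes fin: "finite V" and nlp: "nolp V E" and tr: "tri V E"
    and ind: "\<forall>u\<in>N. \<forall>v\<in>N. {u,v} \<notin> E"
    and FN: "\<forall>e\<in>F. \<exists>u v. e = {u,v} \<and> u \<in> N \<and> v \<in> N"
    and p5: "nop5 V (E \<union> F)"
    and c5: "noc5 (V - N) E"
  shows "colourable 3 V E"
proof -
  have HF: "{u,v} \<notin> F" if "u \<notin> N \<or> v \<notin> N" for u v
    proof
      assume "{u,v} \<in> F"
      then obtain x y where "{u,v} = {x,y}" "x\<in>N" "y\<in>N" using FN by blast
      then have "u \<in> N" "v \<in> N" by (auto simp: doubleton_eq_iff)
      then show False using that by auto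
    qed
  define M where "M = V - N"
  have nopM: "nop5 M E"
    by (rule nop5_transfer[OF p5]) (auto simp: M_def HF)
  obtain \<phi> :: "'a \<Rightarrow> bool" where phi: "\<forall>u\<in>M. \<forall>v\<in>M. {u,v}\<in>E \<longrightarrow> \<phi> u \<noteq> \<phi> v"
    using two_col[of M E] fin nlp tr nopM c5 nolp_mono tri_mono unfolding M_def
    by (metis Diff_subset finite_Diff)
  note T = triD[OF tr]
  note P = nop5D[OF p5]
  have nl: "\<And>v. v \<in> V \<Longrightarrow> {v} \<notin> E" using nlp unfolding nolp_def by auto
  define TT where "TT = {t\<in>M. \<forall>m\<in>M. {t,m} \<notin> E}"
  have C1: "{n,x''} \<in> E"
    if H: "n \<in> N" "n \<in> V" "t \<in> TT" "{n,t} \<in> E" "x \<in> M" "{n,x}\<in>E" "x' \<in> M" "{x,x'}\<in>E"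
      "x'' \<in> M" "{x',x''}\<in>E" "x'' \<noteq> x" for n t x x' x''
  proof (rule ccontr)
    assume nx: "{n,x''} \<notin> E"
    have Ms: "t \<in> M" "t \<notin> N" "x \<notin> N" "x' \<notin> N" "x'' \<notin> N" "t\<in>V" "x\<in>V" "x'\<in>V" "x''\<in>V"
      using H unfolding TT_def M_def by auto
    have a: "{t,x}\<notin>E" "{t,x'}\<notin>E" "{t,x''}\<notin>E" using H unfolding TT_def by auto
    have b: "{n,x'}\<notin>E" using T[of n x x'] H Ms by auto
    have c: "{x,x''}\<notin>E" using T[of x x' x''] H Ms by auto
    show False
      apply (rule P[of t n x x' x''])
      using H Ms a b c nx by (auto simp: HF insert_commute)
  qed
  have side: "\<phi> x = \<phi> y"
    if H: "n \<in> N" "n \<in> V" "t \<in> TT" "{n,t} \<in> E" "x \<in> M - TT" "{n,x}\<in>E" "y \<in> M - TT" "{n,y}\<in>E"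
    for n t x y
  proof (rule ccontr)
    assume ne: "\<phi> x \<noteq> \<phi> y"
    obtain x' where x': "x' \<in> M" "{x,x'}\<in>E" using H(5) unfolding TT_def by auto
    obtain y' where y': "y' \<in> M" "{y,y'}\<in>E" using H(7) unfolding TT_def by auto
    have Ms: "x \<notin> N" "x' \<notin> N" "y \<notin> N" "y' \<notin> N" "x\<in>V" "x'\<in>V" "y\<in>V" "y'\<in>V" "x \<in> M" "y \<in> M" "x' \<in> M" "y' \<in> M"
      using H x' y' unfolding TT_def M_def by auto
    have px: "\<phi> x \<noteq> \<phi> x'" using phi x' Ms by auto
    have py: "\<phi> y \<noteq> \<phi> y'" using phi y' Ms by auto
    have d1: "x' \<noteq> y'" using px py ne by auto
    have d2: "{x',y}\<notin>E" using phi Ms px ne by (auto simp: insert_commute)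
    have d3: "{x,y'}\<notin>E" using phi Ms py ne by (auto simp: insert_commute)
    have nxy: "{x,y}\<notin>E" using T[of n x y] H Ms by auto
    have nx': "{n,x'}\<notin>E" using T[of n x x'] H Ms x' by auto
    have ny': "{n,y'}\<notin>E" using T[of n y y'] H Ms y' by auto
    have d4: "{x',y'}\<notin>E"
    proof
      assume "{x',y'}\<in>E"
      moreover have "y' \<noteq> x" using y' nxy by (auto simp: insert_commute)
      ultimately have "{n,y'} \<in> E" using C1[of n t x x' y'] H Ms x' y' by auto
      then show False using ny' by auto
    qed
    show False
      apply (rule P[of x' x n y y'])
      using H Ms x' y' d1 d2 d3 d4 nxy nx' ny' by (auto simp: HF insert_commute)
  qed
  define col where "col v = (if v \<in> TT then 0 else if v \<notin> N then (if \<phi> v then 1 else 2)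
     else if (\<exists>t\<in>TT. {v,t}\<in>E) then
       (if (\<exists>x\<in>M-TT. {v,x}\<in>E) then (if \<phi> (SOME x. x\<in>M-TT \<and> {v,x}\<in>E) then 2 else 1) else 1)
     else (0::nat))" for v
  show ?thesis
    unfolding colourable_def
  proof (intro exI conjI ballI impI)
    fix v assume "v \<in> V" then show "col v < 3" unfolding col_def by auto
  next
    fix u v assume uv: "u \<in> V" "v \<in> V" "{u,v}\<in>E"
    have key: "col u \<noteq> col v" if H: "u \<in> V" "v \<in> V" "{u,v}\<in>E" "u \<notin> N" for u v
    proof (cases "u \<in> TT")
      case True
      then have vN: "v \<in> N" using H unfolding TT_def M_def by auto
      then have "v \<notin> TT" unfolding TT_def M_def by auto
      moreover have "\<exists>t\<in>TT. {v,t}\<in>E" using True H by (auto simp: insert_commute)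
      ultimately show ?thesis using True vN unfolding col_def by auto
    next
      case False
      have uM: "u \<in> M - TT" using False H unfolding M_def by auto
      show ?thesis
      proof (cases "v \<in> N")
        case False
        then have "v \<in> M" using H unfolding M_def by auto
        moreover then have "v \<notin> TT" using uM H unfolding TT_def by (auto simp: insert_commute)
        ultimately show ?thesis using phi uM H False unfolding col_def by auto
      next
        case True
        then have vT: "v \<notin> TT" unfolding TT_def M_def by auto
        show ?thesis
        proof (cases "\<exists>t\<in>TT. {v,t}\<in>E")
          case False
          then show ?thesis using uM vT True H(4) unfolding col_def by auto
        next
          case tt: True
          then obtain t where t: "t \<in> TT" "{v,t}\<in>E" by auto
          have ex: "\<exists>x. x\<in>M-TT \<and> {v,x}\<in>E" using uM H by (auto simp: insert_commute)
          define x0 where "x0 = (SOME x. x\<in>M-TT \<and> {v,x}\<in>E)"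
          have x0: "x0 \<in> M-TT" "{v,x0}\<in>E" using someI_ex[OF ex] unfolding x0_def by auto
          have "\<phi> x0 = \<phi> u"
            using side[of v t x0 u] True H t x0 uM by (auto simp: insert_commute)
          then show ?thesis using uM vT True tt ex H(4) unfolding col_def x0_def[symmetric] by auto
        qed
      qed
    qed
    show "col u \<noteq> col v"
    proof (cases "u \<in> N")
      case False then show ?thesis using key uv by auto
    next
      case True
      then have "v \<notin> N" using ind uv by auto
      then show ?thesis using key[of v u] uv by (auto simp: insert_commute)
    qed
  qed
qed


lemma nop5_mixed:
  assumes "nop5 V (E \<union> F)" "\<And>u v. u \<notin> N \<or> v \<notin> N \<Longrightarrow> {u,v} \<notin> F"
    "a\<in>V" "b\<in>V" "c\<in>V" "d\<in>V" "e\<in>V" "c \<notin> N" "d \<notin> N" "e \<notin> N"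
    "{a,b}\<in>E \<union> F" "{b,c}\<in>E" "{c,d}\<in>E" "{d,e}\<in>E"
    "{a,c}\<notin>E" "{a,d}\<notin>E" "{a,e}\<notin>E" "{b,d}\<notin>E" "{b,e}\<notin>E" "{c,e}\<notin>E"
  shows False
proof -
  have f: "{a,c}\<notin>F" "{a,d}\<notin>F" "{a,e}\<notin>F" "{b,d}\<notin>F" "{b,e}\<notin>F" "{c,e}\<notin>F"
    using assms(2)[of a c] assms(2)[of a d] assms(2)[of a e] assms(2)[of b d] assms(2)[of b e] assms(2)[of c e]
      assms(8-10) by auto
  show False
    apply (rule nop5D[OF assms(1), of a b c d e])
    using assms(3-20) f by simp_all
qed

lemma main:
  assumes "finite V" "nolp V E" "tri V E"
    "\<forall>u\<in>N. \<forall>v\<in>N. {u,v} \<notin> E"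
    "\<forall>e\<in>F. \<exists>u v. e = {u,v} \<and> u \<in> N \<and> v \<in> N"
    "nop5 V (E \<union> F)"
  shows "colourable 3 V E"
  using assms
proof (induction "card V" arbitrary: V rule: less_induct)
  case less
  note fin = less.prems(1) and nlp = less.prems(2) and tr = less.prems(3)
    and ind = less.prems(4) and FN = less.prems(5) and p5 = less.prems(6)
  show ?case
  proof (cases "noc5 (V - N) E")
    case True
    show ?thesis by (rule caseB[OF fin nlp tr ind FN p5 True])
  next
    case False
    have "\<exists>a b c d e. a\<in>V-N \<and> b\<in>V-N \<and> c\<in>V-N \<and> d\<in>V-N \<and> e\<in>V-N \<and>
      {a,b}\<in>E \<and> {b,c}\<in>E \<and> {c,d}\<in>E \<and> {d,e}\<in>E \<and> {e,a}\<in>E \<and>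
      {a,c}\<notin>E \<and> {a,d}\<notin>E \<and> {b,d}\<notin>E \<and> {b,e}\<notin>E \<and> {c,e}\<notin>E"
      using False unfolding noc5_def by simp blast
    then obtain a b c d e where
      V: "a\<in>V-N" "b\<in>V-N" "c\<in>V-N" "d\<in>V-N" "e\<in>V-N" and
      ed: "{a,b}\<in>E" "{b,c}\<in>E" "{c,d}\<in>E" "{d,e}\<in>E" "{e,a}\<in>E" and
      ne: "{a,c}\<notin>E" "{a,d}\<notin>E" "{b,d}\<notin>E" "{b,e}\<notin>E" "{c,e}\<notin>E"
      by blast
    have HF: "{u,v} \<notin> F" if "u \<notin> N \<or> v \<notin> N" for u v
    proof
      assume "{u,v} \<in> F"
      then obtain x y where "{u,v} = {x,y}" "x\<in>N" "y\<in>N" using FN by blast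
      then have "u \<in> N" "v \<in> N" by (auto simp: doubleton_eq_iff)
      then show False using that by auto
    qed
    note T = triD[OF tr]
    note P = nop5D[OF p5]
    note PM = nop5_mixed[OF p5 HF]
    have nl: "\<And>v. v \<in> V \<Longrightarrow> {v} \<notin> E" using nlp unfolding nolp_def by auto
    define CC where "CC = {a,b,c,d,e}"
    define R where "R = CC \<union> {w\<in>V. \<exists>z\<in>CC. {w,z} \<in> E \<union> F}"
    define pA where "pA w \<longleftrightarrow> {w,b}\<in>E \<and> {w,e}\<in>E \<and> {w,a}\<notin>E \<and> {w,c}\<notin>E \<and> {w,d}\<notin>E" for w
    define pB where "pB w \<longleftrightarrow> {w,a}\<in>E \<and> {w,c}\<in>E \<and> {w,b}\<notin>E \<and> {w,d}\<notin>E \<and> {w,e}\<notin>E" for w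
    define pC where "pC w \<longleftrightarrow> {w,b}\<in>E \<and> {w,d}\<in>E \<and> {w,a}\<notin>E \<and> {w,c}\<notin>E \<and> {w,e}\<notin>E" for w
    define pD where "pD w \<longleftrightarrow> {w,c}\<in>E \<and> {w,e}\<in>E \<and> {w,a}\<notin>E \<and> {w,b}\<notin>E \<and> {w,d}\<notin>E" for w
    define pE where "pE w \<longleftrightarrow> {w,d}\<in>E \<and> {w,a}\<in>E \<and> {w,b}\<notin>E \<and> {w,c}\<notin>E \<and> {w,e}\<notin>E" for w
    have Vs: "a\<in>V" "b\<in>V" "c\<in>V" "d\<in>V" "e\<in>V" "a\<notin>N" "b\<notin>N" "c\<notin>N" "d\<notin>N" "e\<notin>N"
      using V by auto
    have edr: "{b,a}\<in>E" "{c,b}\<in>E" "{d,c}\<in>E" "{e,d}\<in>E" "{a,e}\<in>E"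
      using ed by (simp_all add: insert_commute)
    have ner: "{c,a}\<notin>E" "{d,a}\<notin>E" "{d,b}\<notin>E" "{e,b}\<notin>E" "{e,c}\<notin>E"
      using ne by (simp_all add: insert_commute)
    have RV: "R \<subseteq> V" using Vs unfolding R_def CC_def by auto
    have pat: "pA w \<or> pB w \<or> pC w \<or> pD w \<or> pE w" if w: "w \<in> R" for w
    proof (cases "w \<in> CC")
      case True
      have l: "{a}\<notin>E" "{b}\<notin>E" "{c}\<notin>E" "{d}\<notin>E" "{e}\<notin>E" using nl Vs by auto
      have "w = a \<or> w = b \<or> w = c \<or> w = d \<or> w = e" using True unfolding CC_def by simp
      then show ?thesis
      proof (elim disjE)
        assume "w = a" then have "pA w" unfolding pA_def using ed edr ne ner l by simp
        then show ?thesis by simp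
      next
        assume "w = b" then have "pB w" unfolding pB_def using ed edr ne ner l by simp
        then show ?thesis by simp
      next
        assume "w = c" then have "pC w" unfolding pC_def using ed edr ne ner l by simp
        then show ?thesis by simp
      next
        assume "w = d" then have "pD w" unfolding pD_def using ed edr ne ner l by simp
        then show ?thesis by simp
      next
        assume "w = e" then have "pE w" unfolding pE_def using ed edr ne ner l by simp
        then show ?thesis by simp
      qed
    next
      case False
      have wV: "w \<in> V" using w RV by auto
      have adj: "{w,a}\<in>E \<or> {w,b}\<in>E \<or> {w,c}\<in>E \<or> {w,d}\<in>E \<or> {w,e}\<in>E"
        using w False Vs unfolding R_def CC_def by (auto simp: HF)
      have t1: "\<not> ({w,a}\<in>E \<and> {w,b}\<in>E)" using T[of w a b] wV Vs ed by auto
      have t2: "\<not> ({w,b}\<in>E \<and> {w,c}\<in>E)" using T[of w b c] wV Vs ed by auto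
      have t3: "\<not> ({w,c}\<in>E \<and> {w,d}\<in>E)" using T[of w c d] wV Vs ed by auto
      have t4: "\<not> ({w,d}\<in>E \<and> {w,e}\<in>E)" using T[of w d e] wV Vs ed by auto
      have t5: "\<not> ({w,e}\<in>E \<and> {w,a}\<in>E)" using T[of w e a] wV Vs ed by (auto simp: insert_commute)
      have q1: "{w,a}\<in>E \<longrightarrow> {w,c}\<in>E \<or> {w,d}\<in>E \<or> {w,b}\<in>E"
      proof (rule impI, rule ccontr)
        assume "{w,a}\<in>E" "\<not> ({w,c}\<in>E \<or> {w,d}\<in>E \<or> {w,b}\<in>E)"
        then show False
          apply - apply (rule PM[where a=w and b=a and c=b and d=c and e=d])
          using wV Vs ed ne edr ner by auto
      qed
      have q2: "{w,b}\<in>E \<longrightarrow> {w,d}\<in>E \<or> {w,e}\<in>E \<or> {w,c}\<in>E"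
      proof (rule impI, rule ccontr)
        assume "{w,b}\<in>E" "\<not> ({w,d}\<in>E \<or> {w,e}\<in>E \<or> {w,c}\<in>E)"
        then show False
          apply - apply (rule PM[where a=w and b=b and c=c and d=d and e=e])
          using wV Vs ed ne edr ner by auto
      qed
      have q3: "{w,c}\<in>E \<longrightarrow> {w,e}\<in>E \<or> {w,a}\<in>E \<or> {w,d}\<in>E"
      proof (rule impI, rule ccontr)
        assume "{w,c}\<in>E" "\<not> ({w,e}\<in>E \<or> {w,a}\<in>E \<or> {w,d}\<in>E)"
        then show False
          apply - apply (rule PM[where a=w and b=c and c=d and d=e and e=a])
          using wV Vs ed ne edr ner by auto
      qed
      have q4: "{w,d}\<in>E \<longrightarrow> {w,a}\<in>E \<or> {w,b}\<in>E \<or> {w,e}\<in>E"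
      proof (rule impI, rule ccontr)
        assume "{w,d}\<in>E" "\<not> ({w,a}\<in>E \<or> {w,b}\<in>E \<or> {w,e}\<in>E)"
        then show False
          apply - apply (rule PM[where a=w and b=d and c=e and d=a and e=b])
          using wV Vs ed ne edr ner by auto
      qed
      have q5: "{w,e}\<in>E \<longrightarrow> {w,b}\<in>E \<or> {w,c}\<in>E \<or> {w,a}\<in>E"
      proof (rule impI, rule ccontr)
        assume "{w,e}\<in>E" "\<not> ({w,b}\<in>E \<or> {w,c}\<in>E \<or> {w,a}\<in>E)"
        then show False
          apply - apply (rule PM[where a=w and b=e and c=a and d=b and e=c])
          using wV Vs ed ne edr ner by auto
      qed
      show ?thesis using adj t1 t2 t3 t4 t5 q1 q2 q3 q4 q5
        unfolding pA_def pB_def pC_def pD_def pE_def by blast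
    qed
    have closed: "x \<in> R" if H: "w \<in> R" "x \<in> V" "{w,x} \<in> E \<union> F" for w x
    proof (rule ccontr)
      assume xR: "x \<notin> R"
      have nx: "{x,a}\<notin>E\<union>F" "{x,b}\<notin>E\<union>F" "{x,c}\<notin>E\<union>F" "{x,d}\<notin>E\<union>F" "{x,e}\<notin>E\<union>F"
        using xR H(2) unfolding R_def CC_def by auto
      have wV: "w \<in> V" using H RV by auto
      have xw: "{x,w} \<in> E \<union> F" using H(3) by (simp add: insert_commute)
      show False
        using pat[OF H(1)]
      proof (elim disjE)
        assume "pA w" then show False
          apply - apply (rule P[of x w b c d])
          using wV Vs ed ne nx xw H(2) unfolding pA_def by (auto simp: HF insert_commute)
      next
        assume "pB w" then show False
          apply - apply (rule P[of x w c d e])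
          using wV Vs ed ne nx xw H(2) unfolding pB_def by (auto simp: HF insert_commute)
      next
        assume "pC w" then show False
          apply - apply (rule P[of x w d e a])
          using wV Vs ed ne nx xw H(2) unfolding pC_def by (auto simp: HF insert_commute)
      next
        assume "pD w" then show False
          apply - apply (rule P[of x w e a b])
          using wV Vs ed ne nx xw H(2) unfolding pD_def by (auto simp: HF insert_commute)
      next
        assume "pE w" then show False
          apply - apply (rule P[of x w a b c])
          using wV Vs ed ne nx xw H(2) unfolding pE_def by (auto simp: HF insert_commute)
      qed
    qed
    have card: "card (V - R) < card V"
      using Vs RV fin unfolding R_def CC_def by (intro psubset_card_mono) auto
    have "colourable 3 (V - R) E"
      apply (rule less.hyps[OF card])
      using fin nlp tr ind FN p5 tri_mono nop5_mono nolp_mono by (meson Diff_subset finite_Diff)+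
    then obtain c' :: "'a \<Rightarrow> nat" where c': "\<forall>v\<in>V-R. c' v < 3" "\<forall>u\<in>V-R. \<forall>v\<in>V-R. {u,v}\<in>E \<longrightarrow> c' u \<noteq> c' v"
      unfolding colourable_def by blast
    define cR where "cR w = (if pA w \<or> pC w then 0 else if pB w \<or> pD w then 1 else (2::nat))" for w
    have cR0: "{w,b}\<in>E" if "w \<in> R" "cR w = 0" for w
      using that pat[of w] unfolding cR_def pA_def pB_def pC_def pD_def pE_def by (auto split: if_splits)
    have cR1: "{w,c}\<in>E" if "w \<in> R" "cR w = 1" for w
      using that pat[of w] unfolding cR_def pA_def pB_def pC_def pD_def pE_def by (auto split: if_splits)
    have cR2: "{w,d}\<in>E" if "w \<in> R" "cR w = 2" for w
      using that pat[of w] unfolding cR_def pA_def pB_def pC_def pD_def pE_def by (auto split: if_splits)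
    have cR3: "cR w < 3" for w unfolding cR_def by auto
    have cRok: "cR u \<noteq> cR v" if H: "u \<in> R" "v \<in> R" "{u,v}\<in>E" for u v
    proof
      assume eq: "cR u = cR v"
      have uv: "u \<in> V" "v \<in> V" using H RV by auto
      have "cR u = 0 \<or> cR u = 1 \<or> cR u = 2" using cR3[of u] by auto
      then show False
      proof (elim disjE)
        assume "cR u = 0"
        then show False using cR0[of u] cR0[of v] eq H T[of u v b] uv Vs by (auto simp: insert_commute)
      next
        assume "cR u = 1"
        then show False using cR1[of u] cR1[of v] eq H T[of u v c] uv Vs by (auto simp: insert_commute)
      next
        assume "cR u = 2"
        then show False using cR2[of u] cR2[of v] eq H T[of u v d] uv Vs by (auto simp: insert_commute)
      qed
    qed
    define col where "col w = (if w \<in> R then cR w else c' w)" for w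
    show ?thesis
      unfolding colourable_def
    proof (intro exI conjI ballI impI)
      fix v assume "v \<in> V" then show "col v < 3" using cR3 c' unfolding col_def by auto
    next
      fix u v assume uv: "u \<in> V" "v \<in> V" "{u,v}\<in>E"
      show "col u \<noteq> col v"
      proof (cases "u \<in> R")
        case True
        then have "v \<in> R" using closed uv by auto
        then show ?thesis using cRok True uv unfolding col_def by auto
      next
        case False
        then have "v \<notin> R" using closed[of v u] uv by (auto simp: insert_commute)
        then show ?thesis using c' False uv unfolding col_def by auto
      qed
    qed
  qed
qed


lemma from_probe:
  assumes sg: "simple_graph V E" and tr: "tri V E"
    and N: "independent_set V E N" and F: "F \<subseteq> pairs N" and p: "P5_free V (E \<union> F)"
  shows "colourable 3 V E"
proof -
  have fin: "finite V" using sg unfolding simple_graph_def by auto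
  have nl: "nolp V E" using sg unfolding simple_graph_def nolp_def by fastforce
  have nlF: "nolp V (E \<union> F)" using sg F unfolding simple_graph_def nolp_def pairs_def by fastforce
  have ind: "\<forall>u\<in>N. \<forall>v\<in>N. {u,v} \<notin> E" using N unfolding independent_set_def by auto
  have FN: "\<forall>e\<in>F. \<exists>u v. e = {u,v} \<and> u \<in> N \<and> v \<in> N"
  proof
    fix e assume "e \<in> F"
    then have "e \<subseteq> N" "card e = 2" using F unfolding pairs_def by auto
    then obtain u v where "e = {u,v}" by (meson card_2_iff)
    then show "\<exists>u v. e = {u,v} \<and> u \<in> N \<and> v \<in> N" using \<open>e \<subseteq> N\<close> by auto
  qed
  show ?thesis by (rule main[OF fin nl tr ind FN nop5_from_P5[OF p nlF]])
qed

lemma tri_sub: "tri V H \<Longrightarrow> E \<subseteq> H \<Longrightarrow> tri V E"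
  unfolding tri_def by blast

theorem mainTheorem4:
  fixes V :: "'a set" and E :: "'a set set"
  assumes "simple_graph V E"
  shows "(C3_free V E \<and> probe_P5_free V E \<longrightarrow> colourable 3 V E)
       \<and> (probe_C3_P5_free V E \<longrightarrow> colourable 3 V E)"
proof (intro conjI impI)
  have nl: "nolp V E" using assms unfolding simple_graph_def nolp_def by fastforce
  assume h: "C3_free V E \<and> probe_P5_free V E"
  then obtain N F where "independent_set V E N" "F \<subseteq> pairs N" "P5_free V (E \<union> F)"
    unfolding probe_P5_free_def by blast
  then show "colourable 3 V E"
    using from_probe[OF assms tri_from_C3[OF conjunct1[OF h] nl]] by blast
next
  assume "probe_C3_P5_free V E"
  then obtain N F where NF: "independent_set V E N" "F \<subseteq> pairs N" "C3_free V (E \<union> F)" "P5_free V (E \<union> F)"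
    unfolding probe_C3_P5_free_def by blast
  have nlF: "nolp V (E \<union> F)" using assms NF(2) unfolding simple_graph_def nolp_def pairs_def by fastforce
  have "tri V E" using tri_sub[OF tri_from_C3[OF NF(3) nlF]] by blast
  then show "colourable 3 V E" using from_probe[OF assms _ NF(1,2,4)] by blast
qed

end
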